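(* Let $(A_n)$ be a well-behaved sequence of matrices and $k\ge2$ an integer. Then $\mathbb E\,N_k^{c}(G^{\mathrm{PM}}(A_n))=o(n)$.
   Context: $A_n=(a_{ij})$ is a symmetric non-negative $n\times n$ matrix. The sequence $(A_n)$ is well behaved if all diagonal entries are $0$ and $\max_{i,j}a_{ij}=o(n)$. $G^{\mathrm{PM}}(A_n)$ is the Poisson multigraph on $[n]$ in which the numbers of copies of the edges $ij$ are independent Poisson random variables with mean $a_{ij}/n$. For a multigraph $G$, $N_k^{c}(G)$ is the number of vertices in components of order $k$ that are not trees (i.e. contain a cycle, where a multiple edge counts as a cycle). *)

theory Defs
  imports "HOL-Probability.Probability" "HOL-Library.Landau_Symbols"
begin

definition pois :: "real \<Rightarrow> nat pmf" where
  "pois r = (if r > 0 then poisson_pmf r else return_pmf 0)"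

text \<open>A sequence of matrices: A n i j is the (i,j) entry of A_n, for i, j < n
  (vertex set [n] is represented as {0..<n}).\<close>
definition well_behaved :: "(nat \<Rightarrow> nat \<Rightarrow> nat \<Rightarrow> real) \<Rightarrow> bool" where
  "well_behaved A \<longleftrightarrow>
     (\<forall>n i j. i < n \<longrightarrow> j < n \<longrightarrow> A n i j \<ge> 0 \<and> A n i j = A n j i) \<and>
     (\<forall>n i. i < n \<longrightarrow> A n i i = 0) \<and>
     (\<lambda>n. Max ({A n i j | i j. i < n \<and> j < n} \<union> {0})) \<in> o(\<lambda>n. real n)"

text \<open>A multigraph on {0..<n} is given by edge multiplicities m (i,j) for i < j < n.\<close>
definition edge_pairs :: "nat \<Rightarrow> (nat \<times> nat) set" where
  "edge_pairs n = {(i, j). i < j \<and> j < n}"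

definition G_PM :: "(nat \<Rightarrow> nat \<Rightarrow> nat \<Rightarrow> real) \<Rightarrow> nat \<Rightarrow> (nat \<times> nat \<Rightarrow> nat) pmf" where
  "G_PM A n = Pi_pmf (edge_pairs n) 0 (\<lambda>(i, j). pois (A n i j / real n))"

definition mult :: "(nat \<times> nat \<Rightarrow> nat) \<Rightarrow> nat \<Rightarrow> nat \<Rightarrow> nat" where
  "mult m i j = m (min i j, max i j)"

definition adj :: "nat \<Rightarrow> (nat \<times> nat \<Rightarrow> nat) \<Rightarrow> nat \<Rightarrow> nat \<Rightarrow> bool" where
  "adj n m i j \<longleftrightarrow> i < n \<and> j < n \<and> i \<noteq> j \<and> mult m i j > 0"

definition component :: "nat \<Rightarrow> (nat \<times> nat \<Rightarrow> nat) \<Rightarrow> nat \<Rightarrow> nat set" where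
  "component n m v = {u. u < n \<and> (adj n m)\<^sup>*\<^sup>* v u}"

definition edges_in :: "nat \<Rightarrow> (nat \<times> nat \<Rightarrow> nat) \<Rightarrow> nat set \<Rightarrow> nat" where
  "edges_in n m C = (\<Sum>p\<in>edge_pairs n \<inter> (C \<times> C). m p)"

text \<open>A connected multigraph is a tree iff it has exactly |C|-1 edges (with
  multiplicity); a multiple edge then counts as a cycle.\<close>
definition is_tree_component :: "nat \<Rightarrow> (nat \<times> nat \<Rightarrow> nat) \<Rightarrow> nat set \<Rightarrow> bool" where
  "is_tree_component n m C \<longleftrightarrow> edges_in n m C + 1 = card C"

definition Nkc :: "nat \<Rightarrow> nat \<Rightarrow> (nat \<times> nat \<Rightarrow> nat) \<Rightarrow> nat" where
  "Nkc n k m = card {v. v < n \<and> card (component n m v) = k \<and>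
                        \<not> is_tree_component n m (component n m v)}"

end

theory Submission
  imports Defs
begin

lemma adj_sym: "adj n m x y \<Longrightarrow> adj n m y x"
  by (auto simp: adj_def mult_def min.commute max.commute)

lemma reach_sym: "(adj n m)\<^sup>*\<^sup>* x y \<Longrightarrow> (adj n m)\<^sup>*\<^sup>* y x"
proof (induction rule: rtranclp_induct)
  case base then show ?case by simp
next
  case (step y z) then show ?case
    by (meson adj_sym converse_rtranclp_into_rtranclp)
qed

lemma adj_mono: "m1 \<le> m2 \<Longrightarrow> adj n m1 x y \<Longrightarrow> adj n m2 x y"
  unfolding adj_def mult_def le_fun_def by (meson order.strict_trans2)

lemma reach_mono: "m1 \<le> m2 \<Longrightarrow> (adj n m1)\<^sup>*\<^sup>* x y \<Longrightarrow> (adj n m2)\<^sup>*\<^sup>* x y"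
  by (metis adj_mono mono_rtranclp)

lemma adj_remove:
  assumes "adj n m x y" 
  shows "adj n (m((a,b) := m (a,b) - 1)) x y \<or> (x = a \<and> y = b) \<or> (x = b \<and> y = a)"
  using assms unfolding adj_def mult_def
  by (cases "(min x y, max x y) = (a,b)") (auto simp: min_def max_def split: if_splits)

lemma reach_remove:
  assumes "(adj n (m((a,b) := m (a,b) - 1)))\<^sup>*\<^sup>* a b"
    and "(adj n m)\<^sup>*\<^sup>* x y"
  shows "(adj n (m((a,b) := m (a,b) - 1)))\<^sup>*\<^sup>* x y"
  using assms(2)
proof (induction rule: rtranclp_induct)
  case base then show ?case by simp
next
  case (step y z)
  let ?R = "(adj n (m((a,b) := m (a,b) - 1)))\<^sup>*\<^sup>*"
  from adj_remove[OF step(2), of a b] consider "adj n (m((a,b) := m (a,b) - 1)) y z" | "y = a" "z = b" | "y = b" "z = a" by blast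
  then show ?case
  proof cases
    case 1 then show ?thesis using step(3) by (meson rtranclp.rtrancl_into_rtrancl)
  next
    case 2 then show ?thesis using step(3) assms(1) by (meson rtranclp_trans)
  next
    case 3 then show ?thesis using step(3) reach_sym[OF assms(1)] by (meson rtranclp_trans)
  qed
qed

lemma reach_split:
  assumes "(adj n m)\<^sup>*\<^sup>* x y"
  shows "(adj n (m((a,b) := m (a,b) - 1)))\<^sup>*\<^sup>* x y \<or>
     ((adj n (m((a,b) := m (a,b) - 1)))\<^sup>*\<^sup>* x a \<and> (adj n (m((a,b) := m (a,b) - 1)))\<^sup>*\<^sup>* b y) \<or>
     ((adj n (m((a,b) := m (a,b) - 1)))\<^sup>*\<^sup>* x b \<and> (adj n (m((a,b) := m (a,b) - 1)))\<^sup>*\<^sup>* a y)"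
  using assms
proof (induction rule: rtranclp_induct)
  case base then show ?case by simp
next
  case (step y z)
  from adj_remove[OF step(2), of a b] consider "adj n (m((a,b) := m (a,b) - 1)) y z" | "y = a" "z = b" | "y = b" "z = a" by blast
  then show ?case
  proof cases
    case 1 then show ?thesis using step(3) by (meson rtranclp.rtrancl_into_rtrancl)
  next
    case 2 then show ?thesis using step(3) by blast
  next
    case 3 then show ?thesis using step(3) by blast
  qed
qed

definition kap :: "nat \<Rightarrow> (nat \<times> nat \<Rightarrow> nat) \<Rightarrow> nat set \<Rightarrow> real" where
  "kap n m S = (\<Sum>u\<in>S. 1 / real (card (component n m u)))"

definition closedS :: "nat \<Rightarrow> (nat \<times> nat \<Rightarrow> nat) \<Rightarrow> nat set \<Rightarrow> bool" where
  "closedS n m S \<longleftrightarrow> (\<forall>x y. x \<in> S \<longrightarrow> adj n m x y \<longrightarrow> y \<in> S)"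

definition rfree :: "nat \<Rightarrow> (nat \<times> nat \<Rightarrow> nat) \<Rightarrow> nat set \<Rightarrow> bool" where
  "rfree n m S \<longleftrightarrow> (\<forall>a b. (a,b) \<in> edge_pairs n \<longrightarrow> a \<in> S \<longrightarrow> b \<in> S \<longrightarrow> 0 < m (a,b) \<longrightarrow>
      \<not> (adj n (m((a,b) := m (a,b) - 1)))\<^sup>*\<^sup>* a b)"

lemma comp_finite: "finite (component n m u)"
  by (rule finite_subset[of _ "{..<n}"]) (auto simp: component_def)

lemma comp_self: "u < n \<Longrightarrow> u \<in> component n m u"
  by (simp add: component_def)

lemma comp_card_pos: "u < n \<Longrightarrow> card (component n m u) > 0"
  using comp_finite comp_self card_gt_0_iff by blast

lemma closed_reach: "closedS n m S \<Longrightarrow> x \<in> S \<Longrightarrow> (adj n m)\<^sup>*\<^sup>* x y \<Longrightarrow> y \<in> S"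
proof -
  assume c: "closedS n m S" and x: "x \<in> S" and r: "(adj n m)\<^sup>*\<^sup>* x y"
  from r show "y \<in> S"
    by (induction rule: rtranclp_induct) (use x c in \<open>auto simp: closedS_def\<close>)
qed

lemma comp_sub: "closedS n m S \<Longrightarrow> u \<in> S \<Longrightarrow> component n m u \<subseteq> S"
  using closed_reach by (auto simp: component_def)

lemma sum_comp_one:
  assumes "finite A" "A \<noteq> {}"
  shows "(\<Sum>u\<in>A. 1 / real (card A)) = 1"
  using assms by simp

lemma kap_step:
  fixes m :: "nat \<times> nat \<Rightarrow> nat" and a b n :: nat
  defines "m' \<equiv> m((a,b) := m (a,b) - 1)"
  assumes S: "S \<subseteq> {..<n}" "finite S" and cl: "closedS n m S"
    and ab: "(a,b) \<in> edge_pairs n" "a \<in> S" "b \<in> S" "0 < m (a,b)"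
    and nr: "\<not> (adj n m')\<^sup>*\<^sup>* a b"
  shows "kap n m S = kap n m' S - 1"
proof -
  define A where "A = component n m' a"
  define B where "B = component n m' b"
  have an: "a < n" and bn: "b < n" using ab by (auto simp: edge_pairs_def)
  have adjab: "adj n m a b" using ab by (auto simp: edge_pairs_def adj_def mult_def)
  have le: "m' \<le> m" by (auto simp: m'_def le_fun_def)
  have cl': "closedS n m' S" using cl adj_mono[OF le] by (auto simp: closedS_def)
  have AS: "A \<subseteq> S" using comp_sub[OF cl' ab(2)] by (simp add: A_def)
  have BS: "B \<subseteq> S" using comp_sub[OF cl' ab(3)] by (simp add: B_def)
  have disj: "A \<inter> B = {}"
  proof (rule ccontr)
    assume "A \<inter> B \<noteq> {}"
    then obtain w where "(adj n m')\<^sup>*\<^sup>* a w" "(adj n m')\<^sup>*\<^sup>* b w" by (auto simp: A_def B_def component_def)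
    then have "(adj n m')\<^sup>*\<^sup>* a b" using reach_sym by (meson rtranclp_trans)
    with nr show False by blast
  qed
  have fA: "finite A" "finite B" using comp_finite A_def B_def by auto
  have neA: "A \<noteq> {}" "B \<noteq> {}" using comp_self an bn A_def B_def by auto
  have split: "(adj n m)\<^sup>*\<^sup>* x y \<Longrightarrow> (adj n m')\<^sup>*\<^sup>* x y \<or> ((adj n m')\<^sup>*\<^sup>* x a \<and> (adj n m')\<^sup>*\<^sup>* b y)
      \<or> ((adj n m')\<^sup>*\<^sup>* x b \<and> (adj n m')\<^sup>*\<^sup>* a y)" for x y
    using reach_split[of n m x y a b] by (simp add: m'_def)
  have c1: "component n m u = A \<union> B" if u: "u \<in> A \<union> B" for u
  proof -
    have ua: "(adj n m')\<^sup>*\<^sup>* u a \<or> (adj n m')\<^sup>*\<^sup>* u b" using u reach_sym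
      by (auto simp: A_def B_def component_def)
    show ?thesis
    proof (intro equalityI subsetI)
      fix w assume "w \<in> component n m u"
      then have w: "w < n" "(adj n m)\<^sup>*\<^sup>* u w" by (auto simp: component_def)
      have s1: "(adj n m')\<^sup>*\<^sup>* a u \<or> (adj n m')\<^sup>*\<^sup>* b u" using ua reach_sym by blast
      from split[OF w(2)] s1 have "(adj n m')\<^sup>*\<^sup>* a w \<or> (adj n m')\<^sup>*\<^sup>* b w"
        by (blast intro: rtranclp_trans)
      then show "w \<in> A \<union> B" using w(1) unfolding A_def B_def component_def by blast
    next
      fix w assume "w \<in> A \<union> B"
      then have w: "w < n" "(adj n m')\<^sup>*\<^sup>* a w \<or> (adj n m')\<^sup>*\<^sup>* b w" by (auto simp: A_def B_def component_def)
      have "(adj n m)\<^sup>*\<^sup>* u a \<or> (adj n m)\<^sup>*\<^sup>* u b" using ua reach_mono[OF le] by blast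
      moreover have "(adj n m)\<^sup>*\<^sup>* a w \<or> (adj n m)\<^sup>*\<^sup>* b w" using w(2) reach_mono[OF le] by blast
      moreover have "(adj n m)\<^sup>*\<^sup>* a b" "(adj n m)\<^sup>*\<^sup>* b a" using adjab adj_sym by blast+
      ultimately have "(adj n m)\<^sup>*\<^sup>* u w" by (meson rtranclp_trans)
      with w(1) show "w \<in> component n m u" by (simp add: component_def)
    qed
  qed
  have c2: "component n m u = component n m' u" if u: "u \<notin> A \<union> B" "u < n" for u
  proof (intro equalityI subsetI)
    fix w assume "w \<in> component n m u"
    then have w: "w < n" "(adj n m)\<^sup>*\<^sup>* u w" by (auto simp: component_def)
    have na: "\<not> (adj n m')\<^sup>*\<^sup>* u a" "\<not> (adj n m')\<^sup>*\<^sup>* u b" using u reach_sym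
      unfolding A_def B_def component_def by blast+
    from split[OF w(2)] na w(1) show "w \<in> component n m' u" by (auto simp: component_def)
  next
    fix w assume "w \<in> component n m' u"
    then show "w \<in> component n m u" using reach_mono[OF le] by (auto simp: component_def)
  qed
  have cA: "component n m' u = A" if "u \<in> A" for u
    using that unfolding A_def component_def by (auto intro: rtranclp_trans reach_sym)
  have cB: "component n m' u = B" if "u \<in> B" for u
    using that unfolding B_def component_def by (auto intro: rtranclp_trans reach_sym)
  have AB: "A \<union> B \<subseteq> S" using AS BS by auto
  have fAB: "finite (A \<union> B)" using fA by auto
  have cardAB: "card (A \<union> B) = card A + card B" using card_Un_disjoint fA disj by blast
  have "kap n m S = (\<Sum>u\<in>S - (A \<union> B). 1 / real (card (component n m u))) + (\<Sum>u\<in>A \<union> B. 1 / real (card (component n m u)))"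
    unfolding kap_def using sum.subset_diff[OF AB S(2)] by simp
  also have "(\<Sum>u\<in>A \<union> B. 1 / real (card (component n m u))) = (\<Sum>u\<in>A \<union> B. 1 / real (card (A \<union> B)))"
    using c1 by simp
  also have "\<dots> = 1" using fAB neA by simp
  also have "(\<Sum>u\<in>S - (A \<union> B). 1 / real (card (component n m u))) = (\<Sum>u\<in>S - (A \<union> B). 1 / real (card (component n m' u)))"
    using c2 S(1) by (intro sum.cong) auto
  finally have L: "kap n m S = (\<Sum>u\<in>S - (A \<union> B). 1 / real (card (component n m' u))) + 1" .
  have "kap n m' S = (\<Sum>u\<in>S - (A \<union> B). 1 / real (card (component n m' u))) + (\<Sum>u\<in>A \<union> B. 1 / real (card (component n m' u)))"
    unfolding kap_def using sum.subset_diff[OF AB S(2)] by simp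
  also have "(\<Sum>u\<in>A \<union> B. 1 / real (card (component n m' u))) = (\<Sum>u\<in>A. 1 / real (card (component n m' u))) + (\<Sum>u\<in>B. 1 / real (card (component n m' u)))"
    using sum.union_disjoint[OF fA disj] by simp
  also have "(\<Sum>u\<in>A. 1 / real (card (component n m' u))) = (\<Sum>u\<in>A. 1 / real (card A))" using cA by simp
  also have "\<dots> = 1" using fA neA by simp
  also have "(\<Sum>u\<in>B. 1 / real (card (component n m' u))) = (\<Sum>u\<in>B. 1 / real (card B))" using cB by simp
  also have "\<dots> = 1" using fA neA by simp
  finally have R: "kap n m' S = (\<Sum>u\<in>S - (A \<union> B). 1 / real (card (component n m' u))) + 2" by simp
  show ?thesis using L R by simp
qed

lemma finite_edge_pairs: "finite (edge_pairs n)"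
  by (rule finite_subset[of _ "{..<n} \<times> {..<n}"]) (auto simp: edge_pairs_def)

lemma GL:
  assumes "finite S" "S \<subseteq> {..<n}" "closedS n m S" "rfree n m S"
  shows "real (edges_in n m S) + kap n m S = real (card S)"
  using assms
proof (induction "edges_in n m S" arbitrary: m)
  case 0
  have z: "m p = 0" if "p \<in> edge_pairs n \<inter> (S \<times> S)" for p
    using 0(1) finite_edge_pairs that by (simp add: edges_in_def)
  have c: "component n m u = {u}" if u: "u \<in> S" for u
  proof -
    have un: "u < n" using u 0(3) by auto
    have "w = u" if r: "(adj n m)\<^sup>*\<^sup>* u w" for w
      using r
    proof (cases rule: converse_rtranclpE)
      case base then show ?thesis by simp
    next
      case (step y)
      then have y: "y \<in> S" using 0(4) u by (auto simp: closedS_def)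
      from step(1) have "u \<noteq> y" "0 < m (min u y, max u y)" "y < n" by (auto simp: adj_def mult_def)
      moreover have "(min u y, max u y) \<in> edge_pairs n \<inter> (S \<times> S)"
        using calculation u y un by (auto simp: edge_pairs_def min_def max_def)
      ultimately show ?thesis using z by fastforce
    qed
    then show ?thesis using un by (auto simp: component_def)
  qed
  have "kap n m S = (\<Sum>u\<in>S. 1)" unfolding kap_def using c by simp
  then show ?case using 0(1) by simp
next
  case (Suc e m)
  have fE: "finite (edge_pairs n \<inter> (S \<times> S))" using finite_edge_pairs by blast
  obtain p where p: "p \<in> edge_pairs n \<inter> (S \<times> S)" "0 < m p"
  proof -
    have "edges_in n m S \<noteq> 0" using Suc(2) by simp
    then show ?thesis using that unfolding edges_in_def by (metis neq0_conv sum.neutral)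
  qed
  obtain a b where pab: "p = (a,b)" by fastforce
  define m' where "m' = m(p := m p - 1)"
  have le: "m' \<le> m" by (auto simp: m'_def le_fun_def)
  have "edges_in n m S = m p + (\<Sum>q\<in>edge_pairs n \<inter> (S \<times> S) - {p}. m q)"
    unfolding edges_in_def using sum.remove[OF fE p(1)] by simp
  moreover have "edges_in n m' S = m' p + (\<Sum>q\<in>edge_pairs n \<inter> (S \<times> S) - {p}. m' q)"
    unfolding edges_in_def using sum.remove[OF fE p(1)] by simp
  moreover have "(\<Sum>q\<in>edge_pairs n \<inter> (S \<times> S) - {p}. m' q) = (\<Sum>q\<in>edge_pairs n \<inter> (S \<times> S) - {p}. m q)"
    by (rule sum.cong) (auto simp: m'_def)
  ultimately have e: "e = edges_in n m' S" using Suc(2) p(2) by (simp add: m'_def)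
  have cl': "closedS n m' S" using Suc(5) adj_mono[OF le] by (auto simp: closedS_def)
  have rf': "rfree n m' S"
    unfolding rfree_def
  proof (intro allI impI)
    fix c d assume cd: "(c,d) \<in> edge_pairs n" "c \<in> S" "d \<in> S" "0 < m' (c,d)"
    have "m' (c,d) \<le> m (c,d)" using le by (simp add: le_fun_def)
    then have "0 < m (c,d)" using cd(4) by linarith
    with cd Suc(6) have nr: "\<not> (adj n (m((c,d) := m (c,d) - 1)))\<^sup>*\<^sup>* c d" by (auto simp: rfree_def)
    have "m'((c,d) := m' (c,d) - 1) \<le> m((c,d) := m (c,d) - 1)"
      using le by (auto simp: le_fun_def diff_le_mono)
    then show "\<not> (adj n (m'((c,d) := m' (c,d) - 1)))\<^sup>*\<^sup>* c d" using nr reach_mono by blast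
  qed
  have IH: "real (edges_in n m' S) + kap n m' S = real (card S)"
    using Suc(1)[OF e Suc(3,4) cl' rf'] .
  have nr: "\<not> (adj n m')\<^sup>*\<^sup>* a b" using Suc(6) p pab by (auto simp: rfree_def m'_def)
  have "kap n m S = kap n m' S - 1"
    using kap_step[of S n m a b] Suc(3,4,5) p pab nr by (auto simp: m'_def)
  then show ?case using IH e Suc(2) by simp
qed

lemma nontree_redundant:
  assumes v: "v < n" and nt: "\<not> is_tree_component n m (component n m v)"
  shows "\<exists>a b. (a,b) \<in> edge_pairs n \<and> a \<in> component n m v \<and> b \<in> component n m v \<and> 0 < m (a,b)
     \<and> (adj n (m((a,b) := m (a,b) - 1)))\<^sup>*\<^sup>* a b"
proof (rule ccontr)
  define C where "C = component n m v"
  assume "\<not> ?thesis"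
  then have rf: "rfree n m C" unfolding rfree_def C_def by blast
  have cl: "closedS n m C" unfolding closedS_def C_def component_def
    by (auto simp: adj_def intro: rtranclp.rtrancl_into_rtrancl)
  have sub: "C \<subseteq> {..<n}" by (auto simp: C_def component_def)
  have fC: "finite C" using comp_finite C_def by simp
  have ne: "C \<noteq> {}" using comp_self v C_def by auto
  have cu: "component n m u = C" if "u \<in> C" for u
    using that unfolding C_def component_def by (auto intro: rtranclp_trans reach_sym)
  have "kap n m C = (\<Sum>u\<in>C. 1 / real (card C))" unfolding kap_def using cu by simp
  also have "\<dots> = 1" using fC ne by simp
  finally have "real (edges_in n m C) + 1 = real (card C)" using GL[OF fC sub cl rf] by simp
  then have "is_tree_component n m C" unfolding is_tree_component_def by linarith
  with nt show False by (simp add: C_def)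
qed


lemma pois_palm:
  fixes g :: "nat \<Rightarrow> ennreal"
  assumes r: "r \<ge> 0"
  shows "(\<integral>\<^sup>+ y. of_nat y * g (y - 1) \<partial>pois r) = ennreal r * (\<integral>\<^sup>+ y. g y \<partial>pois r)"
proof (cases "r = 0")
  case True then show ?thesis by (simp add: pois_def)
next
  case False
  then have rp: "r > 0" using r by simp
  let ?P = "poisson_pmf r"
  have P: "pois r = ?P" using rp by (simp add: pois_def)
  define F where "F y = ennreal (pmf ?P y) * (of_nat y * g (y - 1))" for y
  have "(\<integral>\<^sup>+ y. of_nat y * g (y - 1) \<partial>pois r) = (\<Sum>y. F y)"
    unfolding P F_def by (simp add: nn_integral_measure_pmf nn_integral_count_space_nat)
  also have "(\<Sum>y. F y) = (\<Sum>j. F (j + 1)) + (\<Sum>j<1. F j)"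
    by (rule suminf_offset) (rule summableI)
  also have "(\<Sum>j<1. F j) = 0" by (simp add: F_def)
  also have "(\<lambda>j. F (j + 1)) = (\<lambda>j. ennreal r * (ennreal (pmf ?P j) * g j))"
  proof
    fix j
    have nz: "fact j + fact j * real j \<noteq> (0::real)"
      by (metis add_pos_nonneg fact_gt_zero less_irrefl mult_nonneg_nonneg of_nat_0_le_iff fact_ge_zero)
    have eq: "pmf ?P (Suc j) * real (Suc j) = r * pmf ?P j"
      using rp nz by (simp add: pmf_poisson[OF rp] field_simps)
    have "F (j + 1) = ennreal (pmf ?P (Suc j) * real (Suc j)) * g j"
      unfolding F_def by (simp add: ennreal_of_nat_eq_real_of_nat ennreal_mult mult.assoc)
    also have "\<dots> = ennreal (r * pmf ?P j) * g j"
      by (simp only: eq)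
    also have "\<dots> = ennreal r * (ennreal (pmf ?P j) * g j)"
      using rp by (subst ennreal_mult) (auto simp: mult.assoc)
    finally show "F (j + 1) = ennreal r * (ennreal (pmf ?P j) * g j)" .
  qed
  also have "(\<Sum>j. ennreal r * (ennreal (pmf ?P j) * g j)) + 0 = ennreal r * (\<Sum>j. ennreal (pmf ?P j) * g j)"
    by simp
  also have "(\<Sum>j. ennreal (pmf ?P j) * g j) = (\<integral>\<^sup>+ y. g y \<partial>pois r)"
    unfolding P by (simp add: nn_integral_measure_pmf nn_integral_count_space_nat)
  finally show ?thesis .
qed

lemma pi_palm:
  fixes g :: "(nat \<times> nat \<Rightarrow> nat) \<Rightarrow> ennreal" and r :: "nat \<times> nat \<Rightarrow> real"
  assumes E: "finite E" "p \<in> E" and r: "r p \<ge> 0"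
  shows "(\<integral>\<^sup>+ m. of_nat (m p) * g (m(p := m p - 1)) \<partial>Pi_pmf E 0 (\<lambda>q. pois (r q)))
       = ennreal (r p) * (\<integral>\<^sup>+ m. g m \<partial>Pi_pmf E 0 (\<lambda>q. pois (r q)))"
proof -
  define E' where "E' = E - {p}"
  have EE: "E = insert p E'" "finite E'" "p \<notin> E'" using E by (auto simp: E'_def)
  let ?R = "Pi_pmf E' 0 (\<lambda>q. pois (r q))"
  have D: "Pi_pmf E 0 (\<lambda>q. pois (r q)) = map_pmf (\<lambda>(y,f). f(p:=y)) (pair_pmf (pois (r p)) ?R)"
    unfolding EE(1) by (rule Pi_pmf_insert[OF EE(2,3)])
  define G where "G z = (\<integral>\<^sup>+ f. g (f(p := z)) \<partial>?R)" for z
  have "(\<integral>\<^sup>+ m. of_nat (m p) * g (m(p := m p - 1)) \<partial>Pi_pmf E 0 (\<lambda>q. pois (r q)))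
      = (\<integral>\<^sup>+ y. \<integral>\<^sup>+ f. of_nat y * g (f(p := y - 1)) \<partial>?R \<partial>pois (r p))"
    unfolding D by (simp add: nn_integral_pair_pmf' case_prod_unfold)
  also have "\<dots> = (\<integral>\<^sup>+ y. of_nat y * G (y - 1) \<partial>pois (r p))"
    unfolding G_def by (simp add: nn_integral_cmult)
  also have "\<dots> = ennreal (r p) * (\<integral>\<^sup>+ y. G y \<partial>pois (r p))"
    by (rule pois_palm[OF r])
  also have "(\<integral>\<^sup>+ y. G y \<partial>pois (r p)) = (\<integral>\<^sup>+ m. g m \<partial>Pi_pmf E 0 (\<lambda>q. pois (r q)))"
    unfolding D G_def by (simp add: nn_integral_pair_pmf' case_prod_unfold)
  finally show ?thesis .
qed


definition Mx :: "(nat \<Rightarrow> nat \<Rightarrow> nat \<Rightarrow> real) \<Rightarrow> nat \<Rightarrow> real" where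
  "Mx A n = Max ({A n i j | i j. i < n \<and> j < n} \<union> {0})"

lemma Mx_fin: fixes A :: "nat \<Rightarrow> nat \<Rightarrow> nat \<Rightarrow> real" shows "finite ({A n i j | i j. i < n \<and> j < n} \<union> {0})"
proof -
  have eq: "{A n i j | i j. i < n \<and> j < n} = (\<lambda>(i,j). A n i j) ` ({..<n} \<times> {..<n})" by auto
  have "finite {A n i j | i j. i < n \<and> j < n}" unfolding eq by (rule finite_imageI) (simp add: finite_cartesian_product)
  then show ?thesis by simp
qed

lemma Mx_ge: "i < n \<Longrightarrow> j < n \<Longrightarrow> A n i j \<le> Mx A n"
  unfolding Mx_def by (rule Max_ge[OF Mx_fin]) blast

lemma Mx_nonneg: "0 \<le> Mx A n"
  unfolding Mx_def by (rule Max_ge[OF Mx_fin]) blast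

definition Hh :: "nat \<Rightarrow> nat \<Rightarrow> nat \<times> nat \<Rightarrow> nat \<Rightarrow> (nat \<times> nat \<Rightarrow> nat) \<Rightarrow> ennreal" where
  "Hh n k p v m = (if fst p \<in> component n m v \<and> snd p \<in> component n m v \<and> card (component n m v) = k then 1 else 0)"

lemma ind_bound:
  assumes v: "v < n" and T: "card (component n m v) = k" "\<not> is_tree_component n m (component n m v)"
  shows "1 \<le> (\<Sum>p\<in>edge_pairs n. of_nat (m p) * Hh n k p v (m(p := m p - 1)))"
proof -
  obtain a b where ab: "(a,b) \<in> edge_pairs n" "a \<in> component n m v" "b \<in> component n m v" "0 < m (a,b)"
     "(adj n (m((a,b) := m (a,b) - 1)))\<^sup>*\<^sup>* a b"
    using nontree_redundant[OF v T(2)] by blast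
  define m' where "m' = m((a,b) := m (a,b) - 1)"
  have le: "m' \<le> m" by (auto simp: m'_def le_fun_def)
  have "component n m' v = component n m v"
    using reach_mono[OF le] reach_remove[OF ab(5)] unfolding component_def m'_def by blast
  then have "Hh n k (a,b) v m' = 1" using ab T(1) by (simp add: Hh_def)
  then have "1 \<le> of_nat (m (a,b)) * Hh n k (a,b) v (m((a,b) := m (a,b) - 1))"
    using ab(4) by (simp add: m'_def)
  also have "\<dots> \<le> (\<Sum>p\<in>edge_pairs n. of_nat (m p) * Hh n k p v (m(p := m p - 1)))"
    by (rule member_le_sum[OF ab(1)]) (auto simp: finite_edge_pairs)
  finally show ?thesis .
qed

lemma pointwise:
  "ennreal (real (Nkc n k m)) \<le> (\<Sum>v\<in>{..<n}. \<Sum>p\<in>edge_pairs n. of_nat (m p) * Hh n k p v (m(p := m p - 1)))"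
proof -
  let ?T = "\<lambda>v. card (component n m v) = k \<and> \<not> is_tree_component n m (component n m v)"
  have "ennreal (real (Nkc n k m)) = of_nat (card {v\<in>{..<n}. ?T v})"
    unfolding Nkc_def by (simp add: ennreal_of_nat_eq_real_of_nat conj_assoc)
  also have "\<dots> = (\<Sum>v\<in>{v\<in>{..<n}. ?T v}. 1)" by simp
  also have "\<dots> = (\<Sum>v\<in>{..<n}. if ?T v then 1 else 0)" by (rule sum.inter_filter) simp
  also have "\<dots> \<le> (\<Sum>v\<in>{..<n}. \<Sum>p\<in>edge_pairs n. of_nat (m p) * Hh n k p v (m(p := m p - 1)))"
    by (rule sum_mono) (use ind_bound in auto)
  finally show ?thesis .
qed

lemma Hsum:
  "(\<Sum>p\<in>edge_pairs n. Hh n k p v m) \<le> of_nat (k * k)"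
proof -
  define C where "C = component n m v"
  have "(\<Sum>p\<in>edge_pairs n. Hh n k p v m) = (\<Sum>p\<in>{p\<in>edge_pairs n. fst p \<in> C \<and> snd p \<in> C \<and> card C = k}. 1)"
    unfolding Hh_def C_def by (subst sum.inter_filter) (auto simp: finite_edge_pairs)
  also have "\<dots> = of_nat (card {p\<in>edge_pairs n. fst p \<in> C \<and> snd p \<in> C \<and> card C = k})" by simp
  also have "\<dots> \<le> of_nat (k * k)"
  proof (cases "card C = k")
    case True
    have fC: "finite C" using comp_finite C_def by simp
    have "card {p\<in>edge_pairs n. fst p \<in> C \<and> snd p \<in> C \<and> card C = k} \<le> card (C \<times> C)"
      by (rule card_mono) (use fC in auto)
    then have le: "card {p\<in>edge_pairs n. fst p \<in> C \<and> snd p \<in> C \<and> card C = k} \<le> k * k"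
      using True by (simp add: card_cartesian_product)
    then have "real (card {p\<in>edge_pairs n. fst p \<in> C \<and> snd p \<in> C \<and> card C = k}) \<le> real (k * k)"
      by (simp only: of_nat_le_iff)
    then have "ennreal (real (card {p\<in>edge_pairs n. fst p \<in> C \<and> snd p \<in> C \<and> card C = k})) \<le> ennreal (real (k * k))"
      by (rule ennreal_leI)
    then show ?thesis by (simp only: ennreal_of_nat_eq_real_of_nat)
  next
    case False then show ?thesis by simp
  qed
  finally show ?thesis .
qed

lemma G_PM_eq: "G_PM A n = Pi_pmf (edge_pairs n) 0 (\<lambda>q. pois ((\<lambda>(i,j). A n i j / real n) q))"
  unfolding G_PM_def by (simp add: case_prod_unfold)

lemma nn_bound:
  assumes wb: "well_behaved A"
  shows "(\<integral>\<^sup>+ m. ennreal (real (Nkc n k m)) \<partial>G_PM A n) \<le> ennreal (real (k * k) * Mx A n)"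
proof -
  define r where "r = (\<lambda>(i,j). A n i j / real n)"
  let ?P = "Pi_pmf (edge_pairs n) 0 (\<lambda>q. pois (r q))"
  have GP: "G_PM A n = ?P" unfolding G_PM_eq r_def ..
  have rnn: "0 \<le> r p" if "p \<in> edge_pairs n" for p
    using wb that by (auto simp: r_def well_behaved_def edge_pairs_def)
  have rle: "r p \<le> Mx A n / real n" if "p \<in> edge_pairs n" for p
    using that Mx_ge[of "fst p" n "snd p" A] by (auto simp: r_def edge_pairs_def divide_right_mono)
  have "(\<integral>\<^sup>+ m. ennreal (real (Nkc n k m)) \<partial>?P)
      \<le> (\<integral>\<^sup>+ m. (\<Sum>v\<in>{..<n}. \<Sum>p\<in>edge_pairs n. of_nat (m p) * Hh n k p v (m(p := m p - 1))) \<partial>?P)"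
    by (rule nn_integral_mono) (rule pointwise)
  also have "\<dots> = (\<Sum>v\<in>{..<n}. \<Sum>p\<in>edge_pairs n. \<integral>\<^sup>+ m. of_nat (m p) * Hh n k p v (m(p := m p - 1)) \<partial>?P)"
    by (simp add: nn_integral_sum)
  also have "\<dots> = (\<Sum>v\<in>{..<n}. \<Sum>p\<in>edge_pairs n. ennreal (r p) * \<integral>\<^sup>+ m. Hh n k p v m \<partial>?P)"
    by (intro sum.cong refl pi_palm finite_edge_pairs rnn) 
  also have "\<dots> \<le> (\<Sum>v\<in>{..<n}. \<Sum>p\<in>edge_pairs n. ennreal (Mx A n / real n) * \<integral>\<^sup>+ m. Hh n k p v m \<partial>?P)"
    by (intro sum_mono mult_right_mono ennreal_leI rle) auto
  also have "\<dots> = ennreal (Mx A n / real n) * (\<Sum>v\<in>{..<n}. \<integral>\<^sup>+ m. (\<Sum>p\<in>edge_pairs n. Hh n k p v m) \<partial>?P)"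
    by (simp add: nn_integral_sum sum_distrib_left)
  also have "\<dots> \<le> ennreal (Mx A n / real n) * (\<Sum>v\<in>{..<n}. \<integral>\<^sup>+ m. of_nat (k * k) \<partial>?P)"
    by (intro mult_left_mono sum_mono nn_integral_mono Hsum) auto
  also have "\<dots> = ennreal (Mx A n / real n) * (of_nat n * of_nat (k * k))"
    by (simp add: measure_pmf.emeasure_space_1)
  also have "\<dots> \<le> ennreal (real (k * k) * Mx A n)"
  proof (cases "n = 0")
    case True then show ?thesis by simp
  next
    case False
    have "ennreal (Mx A n / real n) * (of_nat n * of_nat (k * k)) = ennreal (Mx A n / real n) * (ennreal (real n) * ennreal (real (k * k)))"
      by (simp only: ennreal_of_nat_eq_real_of_nat)
    also have "ennreal (real n) * ennreal (real (k * k)) = ennreal (real n * real (k * k))"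
      by (rule ennreal_mult[symmetric]) auto
    also have "ennreal (Mx A n / real n) * ennreal (real n * real (k * k)) = ennreal (Mx A n / real n * (real n * real (k * k)))"
      by (rule ennreal_mult[symmetric]) (auto simp: Mx_nonneg)
    also have "Mx A n / real n * (real n * real (k * k)) = Mx A n / real n * real n * real (k * k)"
      by (simp only: mult.assoc)
    also have "Mx A n / real n * real n * real (k * k) = real (k * k) * Mx A n" using False by simp
    finally show ?thesis by simp
  qed
  finally show ?thesis unfolding GP .
qed

lemma bound_n:
  assumes wb: "well_behaved A"
  shows "measure_pmf.expectation (G_PM A n) (\<lambda>m. real (Nkc n k m)) \<le> real (k * k) * Mx A n"
proof -
  have "measure_pmf.expectation (G_PM A n) (\<lambda>m. real (Nkc n k m)) = enn2real (\<integral>\<^sup>+ m. ennreal (real (Nkc n k m)) \<partial>G_PM A n)"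
    by (rule integral_eq_nn_integral) auto
  also have "\<dots> \<le> enn2real (ennreal (real (k * k) * Mx A n))"
    by (rule enn2real_mono[OF nn_bound[OF wb]]) simp
  also have "\<dots> = real (k * k) * Mx A n" using Mx_nonneg[of A n] by simp
  finally show ?thesis .
qed

theorem mainTheorem14:
  fixes A :: "nat \<Rightarrow> nat \<Rightarrow> nat \<Rightarrow> real" and k :: nat
  assumes "well_behaved A" and "k \<ge> 2"
  shows "(\<lambda>n. measure_pmf.expectation (G_PM A n) (\<lambda>m. real (Nkc n k m)))
           \<in> o(\<lambda>n. real n)"
proof -
  have Mo: "Mx A \<in> o(\<lambda>n. real n)"
    using assms(1) unfolding well_behaved_def Mx_def by (simp add: fun_eq_iff)
  have "(\<lambda>n. measure_pmf.expectation (G_PM A n) (\<lambda>m. real (Nkc n k m))) \<in> O(Mx A)"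
  proof (rule bigoI[where c = "real (k * k)"])
    show "\<forall>\<^sub>F n in at_top. norm (measure_pmf.expectation (G_PM A n) (\<lambda>m. real (Nkc n k m))) \<le> real (k * k) * norm (Mx A n)"
    proof (intro always_eventually allI)
      fix n
      have nn: "0 \<le> measure_pmf.expectation (G_PM A n) (\<lambda>m. real (Nkc n k m))" by simp
      show "norm (measure_pmf.expectation (G_PM A n) (\<lambda>m. real (Nkc n k m))) \<le> real (k * k) * norm (Mx A n)"
        using bound_n[OF assms(1), of n k] nn Mx_nonneg[of A n] by simp
    qed
  qed
  then show ?thesis using Mo by (rule landau_o.big_small_trans)
qed

end
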